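(* Let $\mathbb{H}$ be a finite-dimensional complex Hilbert space with $\dim\mathbb{H}\ge2$, let $|X\rangle\in\mathbb{H}^{\otimes3}$ be a known unit vector, let $c'_1,c'_2>0$, and let $\alpha,\beta$ be nonzero complex numbers with $|\alpha|^2+|\beta|^2=1$, $|\mu\rangle=\alpha|0\rangle+\beta|1\rangle\in\mathbb{C}^2$. Then there exists a probabilistic quantum transformation $\mathcal{F}'$ from $\mathbb{C}^2\otimes\mathbb{H}^{\otimes2}\otimes\mathbb{H}^{\otimes2}$ to $\mathbb{H}$, independent of $\alpha,\beta,\psi,\phi$, such that for all unit vectors $|\psi\rangle,|\phi\rangle\in\mathbb{H}$ satisfying $$|\langle X|(|\psi\rangle|\psi\rangle|\phi\rangle)|^2=c'_1,\qquad |\langle X|(|\phi\rangle|\phi\rangle|\psi\rangle)|^2=c'_2,$$ one has $\mathcal{F}'(\rho_\mu\otimes\rho_\psi^{\otimes2}\otimes\rho_\phi^{\otimes2})=\rho_{\varphi'}$ with $$|\varphi'\rangle\propto\alpha e^{i\theta_3}|\psi\rangle+\beta e^{i\theta_4}|\phi\rangle,\quad e^{i\theta_3}=\frac{\langle X|(|\phi\rangle|\phi\rangle|\psi\rangle)}{|\langle X|(|\phi\rangle|\phi\rangle|\psi\rangle)|},\quad e^{i\theta_4}=\frac{\langle X|(|\psi\rangle|\psi\rangle|\phi\rangle)}{|\langle X|(|\psi\rangle|\psi\rangle|\phi\rangle)|}$$ (the superposition assumed nonzero).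
   Context: For a unit vector $|\psi\rangle$, $\rho_\psi=|\psi\rangle\langle\psi|$; $|\varphi\rangle\propto|\chi\rangle$ means $|\varphi\rangle$ is the normalization of $|\chi\rangle$ up to a global phase. A probabilistic quantum transformation from $\mathbb{H}_1$ to $\mathbb{H}_2$ is a completely positive, trace-non-increasing linear map from operators on $\mathbb{H}_1$ to operators on $\mathbb{H}_2$; $\mathcal{F}(\rho)=\sigma$ for pure states means $\mathcal{F}(\rho)=p\sigma$ for some $p>0$. *)

theory Defs
  imports Complex_Main
begin

text \<open>Finite-dimensional complex Hilbert spaces are modelled as C^n. A vector in C^n is a
function nat => complex (only entries with index < n matter), an operator on C^n is a
function nat => nat => complex (only entries with indices < n matter).
Tensor products use the Kronecker convention: index of (i,j) in C^n (x) C^m is i*m+j.\<close>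

definition cinner :: "nat \<Rightarrow> (nat \<Rightarrow> complex) \<Rightarrow> (nat \<Rightarrow> complex) \<Rightarrow> complex" where
  "cinner n u v = (\<Sum>i<n. cnj (u i) * v i)"

definition vnorm :: "nat \<Rightarrow> (nat \<Rightarrow> complex) \<Rightarrow> real" where
  "vnorm n v = sqrt (Re (cinner n v v))"

definition unit_vec :: "nat \<Rightarrow> (nat \<Rightarrow> complex) \<Rightarrow> bool" where
  "unit_vec n v \<longleftrightarrow> vnorm n v = 1"

definition tensor_vec :: "nat \<Rightarrow> (nat \<Rightarrow> complex) \<Rightarrow> (nat \<Rightarrow> complex) \<Rightarrow> (nat \<Rightarrow> complex)" where
  "tensor_vec m v w = (\<lambda>k. v (k div m) * w (k mod m))"

definition tensor_op :: "nat \<Rightarrow> (nat \<Rightarrow> nat \<Rightarrow> complex) \<Rightarrow> (nat \<Rightarrow> nat \<Rightarrow> complex)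
    \<Rightarrow> (nat \<Rightarrow> nat \<Rightarrow> complex)" where
  "tensor_op m A B = (\<lambda>i j. A (i div m) (j div m) * B (i mod m) (j mod m))"

definition proj :: "(nat \<Rightarrow> complex) \<Rightarrow> (nat \<Rightarrow> nat \<Rightarrow> complex)" where
  "proj v = (\<lambda>i j. v i * cnj (v j))"

definition psd :: "nat \<Rightarrow> (nat \<Rightarrow> nat \<Rightarrow> complex) \<Rightarrow> bool" where
  "psd n A \<longleftrightarrow> (\<forall>v. Im (\<Sum>i<n. \<Sum>j<n. cnj (v i) * A i j * v j) = 0
                   \<and> 0 \<le> Re (\<Sum>i<n. \<Sum>j<n. cnj (v i) * A i j * v j))"

definition trace_op :: "nat \<Rightarrow> (nat \<Rightarrow> nat \<Rightarrow> complex) \<Rightarrow> complex" where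
  "trace_op n A = (\<Sum>i<n. A i i)"

text \<open>A linear map from operators on C^n1 to operators on C^n2 is given by its coefficient
array S: (F A)_{a b} = sum_{i,j<n1} S a b i j * A_{i j}. Every linear map has this form.\<close>
definition apply_map :: "nat \<Rightarrow> (nat \<Rightarrow> nat \<Rightarrow> nat \<Rightarrow> nat \<Rightarrow> complex)
    \<Rightarrow> (nat \<Rightarrow> nat \<Rightarrow> complex) \<Rightarrow> (nat \<Rightarrow> nat \<Rightarrow> complex)" where
  "apply_map n1 S A = (\<lambda>a b. \<Sum>i<n1. \<Sum>j<n1. S a b i j * A i j)"

text \<open>F (x) id_k applied to an operator on C^n1 (x) C^k.\<close>
definition apply_map_ext :: "nat \<Rightarrow> nat \<Rightarrow> (nat \<Rightarrow> nat \<Rightarrow> nat \<Rightarrow> nat \<Rightarrow> complex)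
    \<Rightarrow> (nat \<Rightarrow> nat \<Rightarrow> complex) \<Rightarrow> (nat \<Rightarrow> nat \<Rightarrow> complex)" where
  "apply_map_ext n1 k S X = (\<lambda>r s. \<Sum>i<n1. \<Sum>j<n1.
        S (r div k) (s div k) i j * X (i * k + r mod k) (j * k + s mod k))"

definition completely_positive :: "nat \<Rightarrow> nat \<Rightarrow> (nat \<Rightarrow> nat \<Rightarrow> nat \<Rightarrow> nat \<Rightarrow> complex) \<Rightarrow> bool" where
  "completely_positive n1 n2 S \<longleftrightarrow>
     (\<forall>k X. k \<ge> 1 \<longrightarrow> psd (n1 * k) X \<longrightarrow> psd (n2 * k) (apply_map_ext n1 k S X))"

definition trace_nonincreasing :: "nat \<Rightarrow> nat \<Rightarrow> (nat \<Rightarrow> nat \<Rightarrow> nat \<Rightarrow> nat \<Rightarrow> complex) \<Rightarrow> bool" where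
  "trace_nonincreasing n1 n2 S \<longleftrightarrow>
     (\<forall>A. psd n1 A \<longrightarrow> Re (trace_op n2 (apply_map n1 S A)) \<le> Re (trace_op n1 A))"

definition prob_qtrans :: "nat \<Rightarrow> nat \<Rightarrow> (nat \<Rightarrow> nat \<Rightarrow> nat \<Rightarrow> nat \<Rightarrow> complex) \<Rightarrow> bool" where
  "prob_qtrans n1 n2 S \<longleftrightarrow> completely_positive n1 n2 S \<and> trace_nonincreasing n1 n2 S"

definition qubit :: "complex \<Rightarrow> complex \<Rightarrow> (nat \<Rightarrow> complex)" where
  "qubit a b = (\<lambda>i. if i = 0 then a else if i = 1 then b else 0)"

end

theory Submission
  imports Defs
begin


lemma sum_split: fixes a b :: nat shows "(\<Sum>r<a*b. f r) = (\<Sum>i<a. \<Sum>j<b. f (i*b+j)::'c::comm_monoid_add)"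
proof (induction a)
  case 0 then show ?case by simp
next
  case (Suc a)
  have e: "{..<Suc a * b} = {..<a*b} \<union> {a*b..<a*b+b}" by auto
  have "(\<Sum>r<Suc a*b. f r) = (\<Sum>r<a*b. f r) + (\<Sum>r\<in>{a*b..<a*b+b}. f r)"
    unfolding e by (rule sum.union_disjoint) auto
  also have "(\<Sum>r\<in>{a*b..<a*b+b}. f r) = (\<Sum>j<b. f (a*b+j))"
  proof -
    have "{a*b..<a*b+b} = (\<lambda>j. a*b+j) ` {..<b}" 
      by (auto simp: image_iff) (metis add_diff_inverse_nat add_less_cancel_left lessThan_iff not_le)
    then show ?thesis by (simp add: sum.reindex)
  qed
  finally show ?case using Suc by simp
qed

lemma dm1: "j < (b::nat) \<Longrightarrow> (i*b+j) div b = i" by simp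
lemma dm2: "j < (b::nat) \<Longrightarrow> (i*b+j) mod b = j" by simp

lemma sum_pow: fixes d k :: nat shows "(\<Sum>J<d^Suc k. g J) = (\<Sum>x<d. \<Sum>R<d^k. g (x*d^k+R)::'c::comm_monoid_add)"
  using sum_split[where a=d and b="d^k" and f=g] by simp

lemma bnd: "x < (d::nat) \<Longrightarrow> R < b \<Longrightarrow> x*b + R < d*b"
proof -
  assume "x<d" "R<b"
  then have "x*b + R < x*b + b" by simp
  also have "... = (x+1)*b" by simp
  also have "... \<le> d*b" using \<open>x<d\<close> by (intro mult_right_mono) auto
  finally show ?thesis .
qed



definition qf :: "nat \<Rightarrow> (nat \<Rightarrow> nat \<Rightarrow> complex) \<Rightarrow> (nat \<Rightarrow> complex) \<Rightarrow> complex" where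
  "qf n A v = (\<Sum>i<n. \<Sum>j<n. cnj (v i) * A i j * v j)"

lemma psd_qf: "psd n A \<longleftrightarrow> (\<forall>v. Im (qf n A v) = 0 \<and> 0 \<le> Re (qf n A v))"
  unfolding psd_def qf_def by simp

lemma qf_par: "qf n A (\<lambda>i. u i + v i) + qf n A (\<lambda>i. u i - v i) = 2 * qf n A u + 2 * qf n A v"
  unfolding qf_def
  by (simp add: sum.distrib[symmetric] sum_distrib_left algebra_simps)

lemma qf_delta: "m < n \<Longrightarrow> qf n A (\<lambda>i. if i = m then c else 0) = cnj c * A m m * c"
proof -
  assume m: "m < n"
  have "\<And>i. (\<Sum>j<n. cnj (if i = m then c else 0) * A i j * (if j = m then c else 0))
     = (if i = m then cnj c * A m m * c else 0)"
  proof -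
    fix i
    have "(\<Sum>j<n. cnj (if i = m then c else 0) * A i j * (if j = m then c else 0))
      = (\<Sum>j<n. if j = m then cnj (if i = m then c else 0) * A i j * c else 0)"
      by (rule sum.cong) auto
    also have "... = cnj (if i = m then c else 0) * A i m * c" using m by simp
    finally show "(\<Sum>j<n. cnj (if i = m then c else 0) * A i j * (if j = m then c else 0))
     = (if i = m then cnj c * A m m * c else 0)" by simp
  qed
  then show ?thesis unfolding qf_def using m by simp
qed

lemma psd_diag: "psd n A \<Longrightarrow> m < n \<Longrightarrow> 0 \<le> Re (A m m)"
  using qf_delta[of m n A 1] unfolding psd_qf by (metis complex_cnj_one mult_1 mult_1_right)

lemma qf_cong: "(\<And>i. i < n \<Longrightarrow> u i = v i) \<Longrightarrow> qf n A u = qf n A v"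
  unfolding qf_def by simp

lemma qf_bound:
  assumes "psd n A"
  shows "m \<le> n \<Longrightarrow> Re (qf n A (\<lambda>i. if i < m then w i else 0)) \<le> 2^m * (\<Sum>i<m. (cmod (w i))^2 * Re (A i i))"
proof (induction m)
  case 0
  then show ?case by (simp add: qf_def)
next
  case (Suc m)
  let ?u = "\<lambda>i. if i < m then w i else 0"
  let ?v = "\<lambda>i. if i = m then w m else 0"
  have e: "(\<lambda>i. if i < Suc m then w i else 0) = (\<lambda>i. ?u i + ?v i)" by auto
  have p: "0 \<le> Re (qf n A (\<lambda>i. ?u i - ?v i))" using assms unfolding psd_qf by blast
  have "Re (qf n A (\<lambda>i. ?u i + ?v i)) \<le> 2 * Re (qf n A ?u) + 2 * Re (qf n A ?v)"
  proof -
    have "Re (qf n A (\<lambda>i. ?u i + ?v i)) + Re (qf n A (\<lambda>i. ?u i - ?v i)) = 2 * Re (qf n A ?u) + 2 * Re (qf n A ?v)"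
      using arg_cong[OF qf_par[of n A ?u ?v], of Re] by (simp only: plus_complex.sel) simp
    then show ?thesis using p by linarith
  qed
  moreover have "Re (qf n A ?v) = (cmod (w m))^2 * Re (A m m)"
  proof -
    have "qf n A ?v = cnj (w m) * w m * A m m" using Suc.prems qf_delta[of m n A "w m"] by (simp add: ac_simps)
    also have "cnj (w m) * w m = of_real ((cmod (w m))^2)" by (metis complex_norm_square mult.commute)
    finally show ?thesis by simp
  qed
  moreover have "Re (qf n A ?u) \<le> 2^m * (\<Sum>i<m. (cmod (w i))^2 * Re (A i i))" using Suc by simp
  moreover have "0 \<le> (\<Sum>i<m. (cmod (w i))^2 * Re (A i i))"
    using psd_diag[OF assms] Suc.prems by (intro sum_nonneg mult_nonneg_nonneg) auto
  moreover have "0 \<le> (cmod (w m))^2 * Re (A m m)" using psd_diag[OF assms, of m] Suc.prems by simp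
  ultimately have "Re (qf n A (\<lambda>i. ?u i + ?v i)) \<le> 2 * 2^m * (\<Sum>i<m. (cmod (w i))^2 * Re (A i i)) + 2 * (cmod (w m))^2 * Re (A m m)"
    by linarith
  also have "... \<le> 2 * 2^m * (\<Sum>i<m. (cmod (w i))^2 * Re (A i i)) + 2 * 2^m * (cmod (w m))^2 * Re (A m m)"
  proof -
    have "(2::real) \<le> 2 * 2^m" by simp
    then have "2 * ((cmod (w m))^2 * Re (A m m)) \<le> (2 * 2^m) * ((cmod (w m))^2 * Re (A m m))"
      using \<open>0 \<le> (cmod (w m))^2 * Re (A m m)\<close> by (rule mult_right_mono)
    then show ?thesis by (simp add: mult.assoc)
  qed
  finally show ?case unfolding e by (simp add: algebra_simps)
qed

lemma qf_bound2:
  assumes "psd n A" and "\<And>i. i < n \<Longrightarrow> (cmod (w i))^2 \<le> B"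
  shows "Re (qf n A w) \<le> 2^n * B * (\<Sum>i<n. Re (A i i))"
proof -
  have "qf n A w = qf n A (\<lambda>i. if i < n then w i else 0)" by (rule qf_cong) simp
  then have "Re (qf n A w) \<le> 2^n * (\<Sum>i<n. (cmod (w i))^2 * Re (A i i))"
    using qf_bound[OF assms(1), of n w] by simp
  also have "(\<Sum>i<n. (cmod (w i))^2 * Re (A i i)) \<le> (\<Sum>i<n. B * Re (A i i))"
    using assms psd_diag[OF assms(1)] by (intro sum_mono mult_right_mono) auto
  finally show ?thesis by (simp add: sum_distrib_left mult.assoc)
qed



definition kS :: "(nat \<Rightarrow> nat \<Rightarrow> complex) \<Rightarrow> nat \<Rightarrow> nat \<Rightarrow> nat \<Rightarrow> nat \<Rightarrow> complex" where
  "kS K = (\<lambda>a b i j. K a i * cnj (K b j))"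

lemma tensor_proj: "tensor_op m (proj u) (proj w) = proj (tensor_vec m u w)"
  unfolding tensor_op_def proj_def tensor_vec_def by (simp add: fun_eq_iff ac_simps)

lemma apply_kS_proj: "apply_map n (kS K) (proj v) a b = (\<Sum>i<n. K a i * v i) * cnj (\<Sum>j<n. K b j * v j)"
  unfolding apply_map_def kS_def proj_def
  by (simp add: sum_distrib_left sum_distrib_right ac_simps) (rule sum.swap)

lemma trace_kS: "trace_op d (apply_map n (kS K) A) = (\<Sum>a<d. qf n A (\<lambda>i. cnj (K a i)))"
  unfolding trace_op_def apply_map_def kS_def qf_def
  by (simp add: ac_simps)

lemma trace_kS_le:
  assumes "psd n A" and "\<And>a i. (cmod (K a i))^2 \<le> B" and "real d * 2^n * B \<le> 1"
  shows "Re (trace_op d (apply_map n (kS K) A)) \<le> Re (trace_op n A)"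
proof -
  have "Re (trace_op d (apply_map n (kS K) A)) = (\<Sum>a<d. Re (qf n A (\<lambda>i. cnj (K a i))))"
    by (simp add: trace_kS)
  also have "... \<le> (\<Sum>a<d. 2^n * B * (\<Sum>i<n. Re (A i i)))"
    using assms by (intro sum_mono qf_bound2) auto
  also have "... = (real d * 2^n * B) * Re (trace_op n A)" by (simp add: trace_op_def)
  also have "... \<le> 1 * Re (trace_op n A)"
  proof (rule mult_right_mono[OF assms(3)])
    show "0 \<le> Re (trace_op n A)" using psd_diag[OF assms(1)] by (auto simp: trace_op_def intro!: sum_nonneg)
  qed
  finally show ?thesis by simp
qed

lemma qf_conj: "qf N (\<lambda>r s. \<Sum>m<M. \<Sum>m'<M. L r m * Y m m' * cnj (L s m')) v
   = qf M Y (\<lambda>m. \<Sum>r<N. cnj (L r m) * v r)"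
proof -
  have "qf N (\<lambda>r s. \<Sum>m<M. \<Sum>m'<M. L r m * Y m m' * cnj (L s m')) v
     = (\<Sum>r<N. \<Sum>s<N. \<Sum>m<M. \<Sum>m'<M. cnj (v r) * L r m * Y m m' * cnj (L s m') * v s)"
    unfolding qf_def by (simp add: sum_distrib_left sum_distrib_right ac_simps)
  also have "... = (\<Sum>r<N. \<Sum>m<M. \<Sum>s<N. \<Sum>m'<M. cnj (v r) * L r m * Y m m' * cnj (L s m') * v s)"
    by (rule sum.cong[OF refl], rule sum.swap)
  also have "... = (\<Sum>r<N. \<Sum>m<M. \<Sum>m'<M. \<Sum>s<N. cnj (v r) * L r m * Y m m' * cnj (L s m') * v s)"
    by (rule sum.cong[OF refl], rule sum.cong[OF refl], rule sum.swap)
  also have "... = (\<Sum>m<M. \<Sum>r<N. \<Sum>m'<M. \<Sum>s<N. cnj (v r) * L r m * Y m m' * cnj (L s m') * v s)"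
    by (rule sum.swap)
  also have "... = (\<Sum>m<M. \<Sum>m'<M. \<Sum>r<N. \<Sum>s<N. cnj (v r) * L r m * Y m m' * cnj (L s m') * v s)"
    by (rule sum.cong[OF refl], rule sum.swap)
  also have "... = qf M Y (\<lambda>m. \<Sum>r<N. cnj (L r m) * v r)"
    unfolding qf_def by (simp add: sum_distrib_left sum_distrib_right ac_simps)
  finally show ?thesis .
qed

lemma sdelta: "t < (k::nat) \<Longrightarrow> (\<Sum>m<n*k. if m mod k = t then g (m div k) m else 0) = (\<Sum>i<n. g i (i*k+t))"
  by (simp add: sum_split)

lemma ext_form:
  assumes k: "k \<ge> 1"
  shows "apply_map_ext n1 k (kS K) Y r s =
    (\<Sum>m<n1*k. \<Sum>m'<n1*k. (if m mod k = r mod k then K (r div k) (m div k) else 0) * Y m m'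
        * cnj (if m' mod k = s mod k then K (s div k) (m' div k) else 0))"
proof -
  have rk: "r mod k < k" "s mod k < k" using k by auto
  have "\<And>m. (\<Sum>m'<n1*k. (if m mod k = r mod k then K (r div k) (m div k) else 0) * Y m m'
        * cnj (if m' mod k = s mod k then K (s div k) (m' div k) else 0))
      = (\<Sum>m'<n1*k. if m' mod k = s mod k then (if m mod k = r mod k then K (r div k) (m div k) else 0) * Y m m'
        * cnj (K (s div k) (m' div k)) else 0)"
    by (rule sum.cong) auto
  also have "\<And>m. ... m = (\<Sum>j<n1. (if m mod k = r mod k then K (r div k) (m div k) else 0) * Y m (j*k + s mod k)
        * cnj (K (s div k) j))"
    by (rule sdelta[OF rk(2)])
  finally have 1: "\<And>m. (\<Sum>m'<n1*k. (if m mod k = r mod k then K (r div k) (m div k) else 0) * Y m m'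
        * cnj (if m' mod k = s mod k then K (s div k) (m' div k) else 0))
      = (if m mod k = r mod k then K (r div k) (m div k) * (\<Sum>j<n1. Y m (j*k + s mod k) * cnj (K (s div k) j)) else 0)"
    by (simp add: sum_distrib_left ac_simps)
  have "(\<Sum>m<n1*k. (if m mod k = r mod k then K (r div k) (m div k) * (\<Sum>j<n1. Y m (j*k + s mod k) * cnj (K (s div k) j)) else 0))
     = (\<Sum>i<n1. K (r div k) i * (\<Sum>j<n1. Y (i*k + r mod k) (j*k + s mod k) * cnj (K (s div k) j)))"
    by (rule sdelta[OF rk(1)])
  then show ?thesis unfolding 1 apply_map_ext_def kS_def
    by (simp add: sum_distrib_left ac_simps)
qed

lemma cp_kS: "completely_positive n1 n2 (kS K)"
  unfolding completely_positive_def
proof (intro allI impI)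
  fix k Y assume k: "k \<ge> 1" and p: "psd (n1 * k) Y"
  show "psd (n2 * k) (apply_map_ext n1 k (kS K) Y)"
    unfolding psd_qf
  proof
    fix v
    let ?L = "\<lambda>r m. (if m mod k = r mod k then K (r div k) (m div k) else 0)"
    have "qf (n2*k) (apply_map_ext n1 k (kS K) Y) v = qf (n2*k) (\<lambda>r s. \<Sum>m<n1*k. \<Sum>m'<n1*k. ?L r m * Y m m' * cnj (?L s m')) v"
      using ext_form[OF k] by (simp add: qf_def)
    also have "... = qf (n1*k) Y (\<lambda>m. \<Sum>r<n2*k. cnj (?L r m) * v r)" by (rule qf_conj)
    finally show "Im (qf (n2 * k) (apply_map_ext n1 k (kS K) Y) v) = 0 \<and> 0 \<le> Re (qf (n2 * k) (apply_map_ext n1 k (kS K) Y) v)"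
      using p unfolding psd_qf by simp
  qed
qed



lemma bnd2: "x3 < (d::nat) \<Longrightarrow> x4 < d \<Longrightarrow> x3*d + x4 < d^2"
  using bnd[of x3 d x4 d] by (simp add: power2_eq_square)
lemma bnd3: "x2 < (d::nat) \<Longrightarrow> x3 < d \<Longrightarrow> x4 < d \<Longrightarrow> x2*d^2 + (x3*d + x4) < d^3"
  using bnd[of x2 d "x3*d+x4" "d^2"] bnd2[of x3 d x4] by (simp add: power_Suc[symmetric] numeral_3_eq_3 numeral_2_eq_2)
lemma bnd4: "x1 < (d::nat) \<Longrightarrow> x2 < d \<Longrightarrow> x3 < d \<Longrightarrow> x4 < d \<Longrightarrow> x1*d^3 + (x2*d^2 + (x3*d + x4)) < d^4"
  using bnd[of x1 d "x2*d^2 + (x3*d + x4)" "d^3"] bnd3[of x2 d x3 x4]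
  by (simp add: power_Suc[symmetric] numeral_3_eq_3 eval_nat_numeral)

lemma sum3: fixes d :: nat shows "(\<Sum>I<d^3. f I) = (\<Sum>x<d. \<Sum>y<d. \<Sum>z<d. f (x*d^2 + (y*d + z)) :: complex)"
proof -
  have "(\<Sum>I<d^3. f I) = (\<Sum>x<d. \<Sum>R<d^2. f (x*d^2+R))"
    using sum_pow[where d=d and k=2 and g=f] by (simp add: numeral_3_eq_3 numeral_2_eq_2)
  also have "... = (\<Sum>x<d. \<Sum>y<d. \<Sum>z<d. f (x*d^2 + (y*d + z)))"
    by (simp add: numeral_2_eq_2 sum_split)
  finally show ?thesis .
qed

lemma sum4: fixes d :: nat shows "(\<Sum>J<d^4. f J) = (\<Sum>x1<d. \<Sum>x2<d. \<Sum>x3<d. \<Sum>x4<d. f (x1*d^3 + (x2*d^2 + (x3*d + x4))) :: complex)"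
proof -
  have "(\<Sum>J<d^4. f J) = (\<Sum>x<d. \<Sum>R<d^3. f (x*d^3+R))"
    using sum_pow[where d=d and k=3 and g=f] by (simp add: eval_nat_numeral)
  also have "... = (\<Sum>x1<d. \<Sum>x2<d. \<Sum>x3<d. \<Sum>x4<d. f (x1*d^3 + (x2*d^2 + (x3*d + x4))))"
    by (simp add: sum3)
  finally show ?thesis .
qed

lemma cinner3: "cinner (d^3) X (tensor_vec (d^2) u (tensor_vec d v w))
   = (\<Sum>x<d. \<Sum>y<d. \<Sum>z<d. cnj (X (x*d^2 + (y*d + z))) * (u x * (v y * w z)))"
  unfolding cinner_def sum3 tensor_vec_def
  by (intro sum.cong refl) (simp add: bnd2)



definition mask :: "nat \<Rightarrow> (nat \<Rightarrow> complex) \<Rightarrow> nat \<Rightarrow> complex" where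
  "mask d X i = (if i < d^3 then X i else 0)"

definition Kr :: "nat \<Rightarrow> (nat \<Rightarrow> complex) \<Rightarrow> complex \<Rightarrow> complex \<Rightarrow> nat \<Rightarrow> nat \<Rightarrow> complex" where
"Kr d X g0 g1 a I = (let q = I div d^4; J = I mod d^4; x1 = J div d^3; R1 = J mod d^3;
   x2 = R1 div d^2; R2 = R1 mod d^2; x3 = R2 div d; x4 = R2 mod d;
   Xt = mask d X in
   if q = 0 then (if x2 = a then g0 * cnj (Xt (x3*d^2 + (x4*d + x1))) else 0)
   else if q = 1 then (if x4 = a then g1 * cnj (Xt (x1*d^2 + (x2*d + x3))) else 0) else 0)"

lemma sum_if_const: "(\<Sum>x\<in>A. if c then f x else 0) = (if c then sum f A else (0::complex))"
  by simp

lemma KV: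
  fixes d :: nat
  assumes a: "a < d"
  shows "(\<Sum>I<2*d^4. Kr d X g0 g1 a I * tensor_vec (d^4) (qubit \<alpha> \<beta>) (tensor_vec (d^3) \<psi> (tensor_vec (d^2) \<psi> (tensor_vec d \<phi> \<phi>))) I)
    = g0 * \<alpha> * \<psi> a * cinner (d^3) X (tensor_vec (d^2) \<phi> (tensor_vec d \<phi> \<psi>))
      + g1 * \<beta> * \<phi> a * cinner (d^3) X (tensor_vec (d^2) \<psi> (tensor_vec d \<psi> \<phi>))"
proof -
  let ?W = "tensor_vec (d^3) \<psi> (tensor_vec (d^2) \<psi> (tensor_vec d \<phi> \<phi>))"
  have "(\<Sum>I<2*d^4. Kr d X g0 g1 a I * tensor_vec (d^4) (qubit \<alpha> \<beta>) ?W I)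
     = (\<Sum>q<2. \<Sum>J<d^4. Kr d X g0 g1 a (q*d^4+J) * (qubit \<alpha> \<beta> q * ?W J))"
    by (simp add: sum_split tensor_vec_def dm1)
  also have "... = (\<Sum>J<d^4. Kr d X g0 g1 a J * (\<alpha> * ?W J)) + (\<Sum>J<d^4. Kr d X g0 g1 a (d^4+J) * (\<beta> * ?W J))"
    by (simp add: numeral_2_eq_2 qubit_def)
  also have "(\<Sum>J<d^4. Kr d X g0 g1 a J * (\<alpha> * ?W J))
     = (\<Sum>x1<d. \<Sum>x2<d. \<Sum>x3<d. \<Sum>x4<d. if x2 = a then g0 * cnj (X (x3*d^2 + (x4*d + x1))) * (\<alpha> * (\<psi> x1 * (\<psi> x2 * (\<phi> x3 * \<phi> x4)))) else 0)"
    unfolding sum4 by (intro sum.cong refl) (simp add: Kr_def Let_def mask_def tensor_vec_def bnd2 bnd3 bnd4)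
  also have "... = (\<Sum>x1<d. \<Sum>x3<d. \<Sum>x4<d. g0 * cnj (X (x3*d^2 + (x4*d + x1))) * (\<alpha> * (\<psi> x1 * (\<psi> a * (\<phi> x3 * \<phi> x4)))))"
    using a by (simp add: sum_if_const)
  also have "... = (\<Sum>x3<d. \<Sum>x4<d. \<Sum>x1<d. g0 * cnj (X (x3*d^2 + (x4*d + x1))) * (\<alpha> * (\<psi> x1 * (\<psi> a * (\<phi> x3 * \<phi> x4)))))"
    by (subst sum.swap, rule sum.cong[OF refl], rule sum.swap)
  also have "... = g0 * \<alpha> * \<psi> a * cinner (d^3) X (tensor_vec (d^2) \<phi> (tensor_vec d \<phi> \<psi>))"
    unfolding cinner3 by (simp add: sum_distrib_left ac_simps)
  also have "(\<Sum>J<d^4. Kr d X g0 g1 a (d^4+J) * (\<beta> * ?W J))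
     = (\<Sum>x1<d. \<Sum>x2<d. \<Sum>x3<d. \<Sum>x4<d. if x4 = a then g1 * cnj (X (x1*d^2 + (x2*d + x3))) * (\<beta> * (\<psi> x1 * (\<psi> x2 * (\<phi> x3 * \<phi> x4)))) else 0)"
    unfolding sum4 by (intro sum.cong refl) (simp add: Kr_def Let_def mask_def tensor_vec_def bnd2 bnd3 bnd4)
  also have "... = g1 * \<beta> * \<phi> a * cinner (d^3) X (tensor_vec (d^2) \<psi> (tensor_vec d \<psi> \<phi>))"
    unfolding cinner3 using a by (simp add: sum_distrib_left ac_simps)
  finally show ?thesis .
qed



lemma unit_bound: assumes "unit_vec n X" "i < n" shows "(cmod (X i))^2 \<le> 1"
proof -
  have "Re (cinner n X X) = 1" using assms(1) unfolding unit_vec_def vnorm_def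
    by (metis real_sqrt_eq_1_iff)
  moreover have "Re (cinner n X X) = (\<Sum>j<n. (cmod (X j))^2)"
  proof -
    have r: "\<And>z. Re (cnj z * z) = (cmod z)^2" using complex_norm_square by (metis Re_complex_of_real mult.commute)
    show ?thesis unfolding cinner_def by (simp only: Re_sum r)
  qed
  ultimately have "(\<Sum>j<n. (cmod (X j))^2) = 1" by simp
  moreover have "(cmod (X i))^2 \<le> (\<Sum>j<n. (cmod (X j))^2)"
    using assms(2) by (intro member_le_sum) auto
  ultimately show ?thesis by simp
qed

lemma Kr_bound: assumes "unit_vec (d^3) X"
  shows "(cmod (Kr d X g0 g1 a I))^2 \<le> (cmod g0)^2 + (cmod g1)^2"
proof -
  have xb: "\<And>i. (cmod (mask d X i))^2 \<le> 1" using unit_bound[OF assms] by (simp add: mask_def)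
  have gb: "\<And>g i. (cmod (g * cnj (mask d X i)))^2 \<le> (cmod g)^2"
  proof -
    fix g :: complex and i
    have "(cmod (g * cnj (mask d X i)))^2 = (cmod g)^2 * (cmod (mask d X i))^2"
      by (simp add: norm_mult power_mult_distrib)
    also have "... \<le> (cmod g)^2 * 1" using xb[of i] by (intro mult_left_mono) auto
    finally show "(cmod (g * cnj (mask d X i)))^2 \<le> (cmod g)^2" by simp
  qed
  have z: "(cmod (0::complex))^2 \<le> (cmod g0)^2 + (cmod g1)^2" by simp
  have g0b: "\<And>i. (cmod (g0 * cnj (mask d X i)))^2 \<le> (cmod g0)^2 + (cmod g1)^2"
    using gb[of g0] by (smt (verit) zero_le_power2)
  have g1b: "\<And>i. (cmod (g1 * cnj (mask d X i)))^2 \<le> (cmod g0)^2 + (cmod g1)^2"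
    using gb[of g1] by (smt (verit) zero_le_power2)
  show ?thesis unfolding Kr_def Let_def
    by (simp only: if_distrib[of "\<lambda>x. (cmod x)^2"] split: if_split) (intro conjI impI z g0b g1b)
qed



theorem theorem8:
  fixes d :: nat and X :: "nat \<Rightarrow> complex" and c1 c2 :: real
  assumes "d \<ge> 2"
    and "unit_vec (d^3) X"
    and "c1 > 0" and "c2 > 0"
  shows "\<exists>S. prob_qtrans (2 * d^4) d S \<and>
    (\<forall>\<alpha> \<beta> \<psi> \<phi>.
       \<alpha> \<noteq> 0 \<longrightarrow> \<beta> \<noteq> 0 \<longrightarrow> (cmod \<alpha>)\<^sup>2 + (cmod \<beta>)\<^sup>2 = 1 \<longrightarrow>
       unit_vec d \<psi> \<longrightarrow> unit_vec d \<phi> \<longrightarrow>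
       (cmod (cinner (d^3) X (tensor_vec (d^2) \<psi> (tensor_vec d \<psi> \<phi>))))\<^sup>2 = c1 \<longrightarrow>
       (cmod (cinner (d^3) X (tensor_vec (d^2) \<phi> (tensor_vec d \<phi> \<psi>))))\<^sup>2 = c2 \<longrightarrow>
       (let z4 = cinner (d^3) X (tensor_vec (d^2) \<psi> (tensor_vec d \<psi> \<phi>));
            z3 = cinner (d^3) X (tensor_vec (d^2) \<phi> (tensor_vec d \<phi> \<psi>));
            e3 = z3 / complex_of_real (cmod z3);
            e4 = z4 / complex_of_real (cmod z4);
            \<chi> = (\<lambda>i. \<alpha> * e3 * \<psi> i + \<beta> * e4 * \<phi> i);
            \<phi>' = (\<lambda>i. \<chi> i / complex_of_real (vnorm d \<chi>));
            \<rho> = tensor_op (d^4) (proj (qubit \<alpha> \<beta>))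
                   (tensor_op (d^3) (proj \<psi>) (tensor_op (d^2) (proj \<psi>)
                     (tensor_op d (proj \<phi>) (proj \<phi>))))
        in vnorm d \<chi> \<noteq> 0 \<longrightarrow>
           (\<exists>p > 0. \<forall>a<d. \<forall>b<d.
              apply_map (2 * d^4) S \<rho> a b = complex_of_real p * proj \<phi>' a b)))"
proof -
  define n where "n = 2 * d^4"
  define t :: real where "t = 1 / sqrt (real d * 2^n * (1/c1 + 1/c2))"
  have dpos: "real d > 0" using assms(1) by simp
  have Dpos: "real d * 2^n * (1/c1 + 1/c2) > 0" using dpos assms(3,4) by (intro mult_pos_pos add_pos_pos) auto
  have tpos: "t > 0" unfolding t_def using Dpos by simp
  have t2: "t^2 = 1 / (real d * 2^n * (1/c1 + 1/c2))"
    unfolding t_def using Dpos by (simp add: power_divide)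
  define g0 where "g0 = complex_of_real (t / sqrt c2)"
  define g1 where "g1 = complex_of_real (t / sqrt c1)"
  define K where "K = Kr d X g0 g1"
  have Bnd: "\<And>a i. (cmod (K a i))^2 \<le> t^2/c2 + t^2/c1"
  proof -
    fix a i
    have "(cmod g0)^2 = t^2/c2" "(cmod g1)^2 = t^2/c1"
      unfolding g0_def g1_def norm_of_real power2_abs using tpos assms(3,4) by (simp_all only: power_divide real_sqrt_pow2 less_imp_le)
    then show "(cmod (K a i))^2 \<le> t^2/c2 + t^2/c1" unfolding K_def using Kr_bound[OF assms(2)] by metis
  qed
  have B1: "real d * 2^n * (t^2/c2 + t^2/c1) \<le> 1"
  proof -
    have "real d * 2^n * (t^2/c2 + t^2/c1) = (real d * 2^n * (1/c1 + 1/c2)) * t^2" by (simp add: field_simps)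
    also have "... = 1"
    proof -
      have "0 < d" using assms(1) by simp
      moreover have "1/c1 + 1/c2 \<noteq> 0" using assms(3,4) by (smt (verit) divide_pos_pos)
      ultimately show ?thesis unfolding t2 by simp
    qed
    finally show ?thesis by simp
  qed
  have pq: "prob_qtrans (2 * d^4) d (kS K)"
    unfolding prob_qtrans_def trace_nonincreasing_def
    using cp_kS trace_kS_le[where K=K, OF _ Bnd B1] unfolding n_def by blast
  show ?thesis
  proof (intro exI[of _ "kS K"] conjI pq allI impI)
    fix \<alpha> \<beta> :: complex and \<psi> \<phi> :: "nat \<Rightarrow> complex"
    assume h1: "(cmod (cinner (d^3) X (tensor_vec (d^2) \<psi> (tensor_vec d \<psi> \<phi>))))\<^sup>2 = c1"
      and h2: "(cmod (cinner (d^3) X (tensor_vec (d^2) \<phi> (tensor_vec d \<phi> \<psi>))))\<^sup>2 = c2"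
    define z4 where "z4 = cinner (d^3) X (tensor_vec (d^2) \<psi> (tensor_vec d \<psi> \<phi>))"
    define z3 where "z3 = cinner (d^3) X (tensor_vec (d^2) \<phi> (tensor_vec d \<phi> \<psi>))"
    have m4: "cmod z4 = sqrt c1" using h1 unfolding z4_def by (metis norm_ge_zero real_sqrt_unique)
    have m3: "cmod z3 = sqrt c2" using h2 unfolding z3_def by (metis norm_ge_zero real_sqrt_unique)
    define \<chi> where "\<chi> = (\<lambda>i. \<alpha> * (z3 / complex_of_real (cmod z3)) * \<psi> i + \<beta> * (z4 / complex_of_real (cmod z4)) * \<phi> i)"
    have \<chi>i: "\<And>i. \<alpha> * (z3 / complex_of_real (cmod z3)) * \<psi> i + \<beta> * (z4 / complex_of_real (cmod z4)) * \<phi> i = \<chi> i"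
      unfolding \<chi>_def by simp
    define V where "V = tensor_vec (d^4) (qubit \<alpha> \<beta>) (tensor_vec (d^3) \<psi> (tensor_vec (d^2) \<psi> (tensor_vec d \<phi> \<phi>)))"
    have rho: "tensor_op (d^4) (proj (qubit \<alpha> \<beta>))
                   (tensor_op (d^3) (proj \<psi>) (tensor_op (d^2) (proj \<psi>)
                     (tensor_op d (proj \<phi>) (proj \<phi>)))) = proj V"
      unfolding V_def by (simp add: tensor_proj)
    have KVa: "\<And>a. a < d \<Longrightarrow> (\<Sum>i<2*d^4. K a i * V i) = complex_of_real t * \<chi> a"
    proof -
      fix a assume a: "a < d"
      have "(\<Sum>i<2*d^4. K a i * V i) = g0 * \<alpha> * \<psi> a * z3 + g1 * \<beta> * \<phi> a * z4"
        unfolding K_def V_def z3_def z4_def by (rule KV[OF a])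
      also have "... = complex_of_real t * \<chi> a"
        unfolding \<chi>_def g0_def g1_def m3 m4 using assms(3,4)
        by (simp add: field_simps)
      finally show "(\<Sum>i<2*d^4. K a i * V i) = complex_of_real t * \<chi> a" .
    qed
    show "let z4 = cinner (d^3) X (tensor_vec (d^2) \<psi> (tensor_vec d \<psi> \<phi>));
            z3 = cinner (d^3) X (tensor_vec (d^2) \<phi> (tensor_vec d \<phi> \<psi>));
            e3 = z3 / complex_of_real (cmod z3);
            e4 = z4 / complex_of_real (cmod z4);
            \<chi> = (\<lambda>i. \<alpha> * e3 * \<psi> i + \<beta> * e4 * \<phi> i);
            \<phi>' = (\<lambda>i. \<chi> i / complex_of_real (vnorm d \<chi>));
            \<rho> = tensor_op (d^4) (proj (qubit \<alpha> \<beta>))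
                   (tensor_op (d^3) (proj \<psi>) (tensor_op (d^2) (proj \<psi>)
                     (tensor_op d (proj \<phi>) (proj \<phi>))))
        in vnorm d \<chi> \<noteq> 0 \<longrightarrow>
           (\<exists>p > 0. \<forall>a<d. \<forall>b<d.
              apply_map (2 * d^4) (kS K) \<rho> a b = complex_of_real p * proj \<phi>' a b)"
      unfolding Let_def z3_def[symmetric] z4_def[symmetric] \<chi>_def[symmetric] \<chi>i rho
    proof (intro impI exI[of _ "t^2 * (vnorm d \<chi>)^2"] conjI allI)
      assume vn: "vnorm d \<chi> \<noteq> 0"
      show "0 < t^2 * (vnorm d \<chi>)^2" using tpos vn by simp
      fix a b assume a: "a < d" and b: "b < d"
      have "apply_map (2 * d^4) (kS K) (proj V) a b = (complex_of_real t * \<chi> a) * cnj (complex_of_real t * \<chi> b)"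
        unfolding apply_kS_proj KVa[OF a] KVa[OF b] ..
      also have "... = complex_of_real (t^2 * (vnorm d \<chi>)^2) * proj (\<lambda>i. \<chi> i / complex_of_real (vnorm d \<chi>)) a b"
        unfolding proj_def using vn by (simp add: field_simps power2_eq_square)
      finally show "apply_map (2 * d^4) (kS K) (proj V) a b = complex_of_real (t^2 * (vnorm d \<chi>)^2) * proj (\<lambda>i. \<chi> i / complex_of_real (vnorm d \<chi>)) a b" .
    qed
  qed
qed

end
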